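(* Let $\nu\ge2$ and $2\le n,m\le\nu$ be fixed integers and let $M\ge1$. Let $$P_1(Z)=\sum_{i=0}^{n-1}a_iZ^i\qquad\text{and}\qquad P_2(Z)=\sum_{i=0}^{m-1}b_iZ^i$$ be polynomials with complex coefficients such that $a_{n-1},b_{m-1}\ne0$ and $|a_i|,|b_i|<M^{\nu-i}$ for all $i=0,\ldots,\nu-1$ (for which these coefficients are defined). Then $$|\mathrm{Res}(P_1,P_2)|\ll M^{\nu^2-1},$$ where the implied constant depends only on $\nu$.
   Context: $\mathrm{Res}(P_1,P_2)$ denotes the resultant, i.e. the determinant of the $(n+m-2)\times(n+m-2)$ Sylvester matrix whose first $m-1$ rows are the shifted coefficient rows $(a_{n-1},\ldots,a_1,a_0)$ of $P_1$ and whose last $n-1$ rows are the shifted coefficient rows $(b_{m-1},\ldots,b_1,b_0)$ of $P_2$. *)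

theory Defs
  imports "HOL-Analysis.Analysis" "Subresultants.Resultant_Prelim"
begin

end

theory Submission
  imports Defs
begin

lemma det_bound:
  fixes A :: "complex mat"
  assumes A: "A \<in> carrier_mat N N" and K: "K \<ge> 0"
    and r: "\<And>i. i < N \<Longrightarrow> r i > 0" and c: "\<And>j. j < N \<Longrightarrow> c j \<ge> 0"
    and b: "\<And>i j. i < N \<Longrightarrow> j < N \<Longrightarrow> norm (A $$ (i,j)) * r i \<le> K * c j"
  shows "norm (det A) * (\<Prod>i=0..<N. r i) \<le> fact N * K ^ N * (\<Prod>j=0..<N. c j)"
proof -
  let ?P = "{p. p permutes {0..<N}}"
  have "norm (det A) \<le> (\<Sum>p\<in>?P. norm (signof p * (\<Prod>i=0..<N. A $$ (i, p i))))"
    unfolding det_def'[OF A] by (rule norm_sum)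
  also have "\<dots> = (\<Sum>p\<in>?P. (\<Prod>i=0..<N. norm (A $$ (i, p i))))"
    by (intro sum.cong refl) (simp add: norm_mult prod_norm sign_def)
  finally have 1: "norm (det A) * (\<Prod>i=0..<N. r i) \<le> (\<Sum>p\<in>?P. (\<Prod>i=0..<N. norm (A $$ (i, p i)))) * (\<Prod>i=0..<N. r i)"
    using r by (intro mult_right_mono prod_nonneg) (auto intro: less_imp_le)
  also have "\<dots> = (\<Sum>p\<in>?P. (\<Prod>i=0..<N. norm (A $$ (i, p i)) * r i))"
    by (simp add: sum_distrib_right prod.distrib)
  also have "\<dots> \<le> (\<Sum>p\<in>?P. (\<Prod>i=0..<N. K * c (p i)))"
  proof (intro sum_mono prod_mono conjI)
    fix p i assume p: "p \<in> ?P" and i: "i \<in> {0..<N}"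
    have "p i \<in> {0..<N}" using p i by (auto simp: permutes_in_image)
    then show "norm (A $$ (i, p i)) * r i \<le> K * c (p i)" using b i by auto
    show "0 \<le> norm (A $$ (i, p i)) * r i" using r[of i] i by (intro mult_nonneg_nonneg) auto
  qed
  also have "\<dots> = (\<Sum>p\<in>?P. K ^ N * (\<Prod>j=0..<N. c j))"
  proof (intro sum.cong refl)
    fix p assume p: "p \<in> ?P"
    have "(\<Prod>i=0..<N. c (p i)) = (\<Prod>j=0..<N. c j)"
      using prod.permute[of p "{0..<N}" c] p by (simp add: comp_def)
    then show "(\<Prod>i=0..<N. K * c (p i)) = K ^ N * (\<Prod>j=0..<N. c j)"
      by (simp add: prod.distrib)
  qed
  also have "\<dots> = fact N * K ^ N * (\<Prod>j=0..<N. c j)"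
    by (simp add: card_permutations)
  finally show ?thesis .
qed


theorem corollary2p31:
  fixes \<nu> :: nat
  assumes "\<nu> \<ge> 2"
  shows "\<exists>C::real. \<forall>(n::nat) (m::nat) (M::real) (P1::complex poly) (P2::complex poly).
     2 \<le> n \<and> n \<le> \<nu> \<and> 2 \<le> m \<and> m \<le> \<nu> \<and> M \<ge> 1 \<and>
     degree P1 = n - 1 \<and> coeff P1 (n - 1) \<noteq> 0 \<and>
     degree P2 = m - 1 \<and> coeff P2 (m - 1) \<noteq> 0 \<and>
     (\<forall>i < n. norm (coeff P1 i) < M ^ (\<nu> - i)) \<and>
     (\<forall>i < m. norm (coeff P2 i) < M ^ (\<nu> - i))
     \<longrightarrow> norm (resultant P1 P2) \<le> C * M ^ (\<nu>\<^sup>2 - 1)"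
proof (intro exI allI impI)
  fix n m :: nat and M :: real and P1 P2 :: "complex poly"
  assume H: "2 \<le> n \<and> n \<le> \<nu> \<and> 2 \<le> m \<and> m \<le> \<nu> \<and> M \<ge> 1 \<and>
     degree P1 = n - 1 \<and> coeff P1 (n - 1) \<noteq> 0 \<and>
     degree P2 = m - 1 \<and> coeff P2 (m - 1) \<noteq> 0 \<and>
     (\<forall>i < n. norm (coeff P1 i) < M ^ (\<nu> - i)) \<and>
     (\<forall>i < m. norm (coeff P2 i) < M ^ (\<nu> - i))"
  define dp where "dp = degree P1"
  define dq where "dq = degree P2"
  define N where "N = dp + dq"
  have M1: "M \<ge> 1" and Mpos: "M > 0" using H by auto
  have dp: "1 \<le> dp" "dp < \<nu>" and dq: "1 \<le> dq" "dq < \<nu>" using H by (auto simp: dp_def dq_def)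
  have c1: "\<And>i. i \<le> dp \<Longrightarrow> norm (coeff P1 i) \<le> M ^ (\<nu> - i)"
    using H by (auto simp: dp_def intro: less_imp_le)
  have c2: "\<And>i. i \<le> dq \<Longrightarrow> norm (coeff P2 i) \<le> M ^ (\<nu> - i)"
    using H by (auto simp: dq_def intro: less_imp_le)
  define r where "r i = M ^ i * (if i < dq then M ^ dp else 1)" for i
  define c where "c j = M ^ j" for j :: nat
  have A: "sylvester_mat P1 P2 \<in> carrier_mat N N" by (simp add: N_def dp_def dq_def sylvester_carrier_mat)
  have b: "norm (sylvester_mat P1 P2 $$ (i,j)) * r i \<le> M ^ \<nu> * c j" if i: "i < N" and j: "j < N" for i j
  proof -
    have ent: "sylvester_mat P1 P2 $$ (i,j) =
    (if i < dq then
       if i \<le> j \<and> j - i \<le> dp then coeff P1 (dp + i - j) else 0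
     else if i - dq \<le> j \<and> j \<le> i then coeff P2 (i - j) else 0)"
      using sylvester_index_mat[of i P1 P2 j] i j by (simp add: N_def dp_def dq_def)
    have rpos: "r i > 0" using Mpos by (simp add: r_def)
    have cpos: "0 \<le> M ^ \<nu> * c j" using Mpos by (simp add: c_def)
    show ?thesis
    proof (cases "i < dq")
      case True
      show ?thesis
      proof (cases "i \<le> j \<and> j - i \<le> dp")
        case T2: True
        have "norm (sylvester_mat P1 P2 $$ (i,j)) * r i \<le> M ^ (\<nu> - (dp + i - j)) * (M ^ i * M ^ dp)"
        proof -
          have e1: "sylvester_mat P1 P2 $$ (i,j) = coeff P1 (dp + i - j)" using True T2 ent by simp
          have e2: "r i = M ^ i * M ^ dp" using True by (simp add: r_def)
          show ?thesis unfolding e1 e2 using c1[of "dp + i - j"] T2 Mpos by (intro mult_right_mono) auto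
        qed
        also have "\<dots> = M ^ (\<nu> - (dp + i - j) + i + dp)" by (simp add: power_add)
        also have "\<nu> - (dp + i - j) + i + dp = \<nu> + j" using T2 dp by linarith
        finally show ?thesis by (simp add: c_def power_add)
      qed (use True ent cpos in auto)
    next
      case False
      show ?thesis
      proof (cases "i - dq \<le> j \<and> j \<le> i")
        case T2: True
        have "norm (sylvester_mat P1 P2 $$ (i,j)) * r i \<le> M ^ (\<nu> - (i - j)) * M ^ i"
        proof -
          have e1: "sylvester_mat P1 P2 $$ (i,j) = coeff P2 (i - j)" using False T2 ent by simp
          have e2: "r i = M ^ i" using False by (simp add: r_def)
          show ?thesis unfolding e1 e2 using c2[of "i - j"] T2 Mpos by (intro mult_right_mono) auto
        qed
        also have "\<dots> = M ^ (\<nu> - (i - j) + i)" by (simp add: power_add)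
        also have "\<nu> - (i - j) + i = \<nu> + j" using T2 dq by linarith
        finally show ?thesis by (simp add: c_def power_add)
      qed (use False ent cpos in auto)
    qed
  qed
  have main: "norm (det (sylvester_mat P1 P2)) * (\<Prod>i=0..<N. r i) \<le> fact N * (M ^ \<nu>) ^ N * (\<Prod>j=0..<N. c j)"
    by (rule det_bound[OF A]) (use Mpos b in \<open>auto simp: r_def c_def\<close>)
  define X where "X = (\<Prod>j=0..<N. c j)"
  have Xpos: "X > 0" using Mpos by (auto simp: X_def c_def intro: prod_pos)
  have "(\<Prod>i=0..<N. r i) = X * (\<Prod>i=0..<N. (if i < dq then M ^ dp else 1))"
    by (simp add: r_def X_def c_def prod.distrib)
  also have "(\<Prod>i=0..<N. (if i < dq then M ^ dp else 1)) = (\<Prod>i\<in>{0..<dq}. M ^ dp)"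
  proof -
    have "{0..<N} \<inter> {x. x < dq} = {0..<dq}" by (auto simp: N_def)
    then show ?thesis by (simp add: prod.If_cases)
  qed
  also have "\<dots> = M ^ (dp * dq)" by (simp add: power_mult)
  finally have pr: "(\<Prod>i=0..<N. r i) = X * M ^ (dp * dq)" .
  have le1: "dp * dq \<le> \<nu> * N"
  proof -
    have "dp * dq \<le> \<nu> * dq" using dp by simp
    also have "\<dots> \<le> \<nu> * N" by (simp add: N_def)
    finally show ?thesis .
  qed
  have "norm (resultant P1 P2) * M ^ (dp * dq) \<le> fact N * M ^ (\<nu> * N)"
  proof -
    have "(norm (resultant P1 P2) * M ^ (dp * dq)) * X \<le> (fact N * M ^ (\<nu> * N)) * X"
    proof -
      have pw: "(M ^ \<nu>) ^ N = M ^ (\<nu> * N)" by (simp add: power_mult)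
      show ?thesis using main unfolding pr pw X_def resultant_def by (simp add: mult_ac)
    qed
    then show ?thesis using Xpos by simp
  qed
  also have "M ^ (\<nu> * N) = M ^ (\<nu> * N - dp * dq) * M ^ (dp * dq)"
    using le1 by (simp add: power_add[symmetric])
  finally have r1: "norm (resultant P1 P2) \<le> fact N * M ^ (\<nu> * N - dp * dq)"
    using Mpos by simp
  have iq: "int \<nu> * int N + 1 \<le> int \<nu> * int \<nu> + int dp * int dq"
  proof -
    have "(int \<nu> - int dp) * (int \<nu> - int dq) \<ge> 1 * 1"
      using dp dq by (intro mult_mono) auto
    then show ?thesis by (simp add: N_def algebra_simps)
  qed
  have ex: "\<nu> * N - dp * dq \<le> \<nu>\<^sup>2 - 1"
  proof -
    have "\<nu> * N + 1 \<le> \<nu> * \<nu> + dp * dq" using iq by (simp add: of_nat_mult[symmetric] del: of_nat_mult) 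
    then show ?thesis by (simp add: power2_eq_square)
  qed
  have "fact N * M ^ (\<nu> * N - dp * dq) \<le> fact (2 * \<nu>) * M ^ (\<nu>\<^sup>2 - 1)"
  proof (intro mult_mono)
    show "(fact N :: real) \<le> fact (2 * \<nu>)" using dp dq by (intro fact_mono) (simp add: N_def)
    show "M ^ (\<nu> * N - dp * dq) \<le> M ^ (\<nu>\<^sup>2 - 1)" using power_increasing[OF ex M1] .
  qed (use Mpos in auto)
  with r1 show "norm (resultant P1 P2) \<le> fact (2 * \<nu>) * M ^ (\<nu>\<^sup>2 - 1)" by linarith
qed

end
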